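(* Consider a generalized cluster pattern with principal coefficients at $t_0$, and let $t\in\mathbb T_n$ be arbitrary. Then: (1) For $i\neq k$ in $[1,n]$, the entries $c^{(i)}_{(k,l),j}$ of $C^{(i)}_t$ with $l\in[1,r_k]$, $j\in[1,r_i]$ are all equal (independent of $l$ and $j$). (2) For each $i$, there are an integer $c$ and a sign $\epsilon\in\{1,-1\}$ such that $c^{(i)}_{(i,l),l}=c+\epsilon$ for all $l\in[1,r_i]$ and $c^{(i)}_{(i,l),j}=c$ for all $l\neq j$ in $[1,r_i]$.
   Context: A semifield $(\mathbb P,\oplus,\cdot)$ is a torsion-free multiplicative abelian group with a commutative, associative binary operation $\oplus$ over which multiplication distributes. For $p\in\mathbb P$ put $p^+=p/(p\oplus1)$, $p^-=1/(p\oplus1)$. The tropical semifield $\mathrm{Trop}(s_a\mid a\in I')$ ($I'$ finite) is the free abelian group on the $s_a$ with $\prod_a s_a^{a_a}\oplus\prod_a s_a^{b_a}=\prod_a s_a^{\min(a_a,b_a)}$. For skew-symmetrizable $B\in\mathrm{Mat}_{n\times n}(\mathbb Z)$, $\mu_k(B)$ denotes Fomin–Zelevinsky matrix mutation. Generalized labeled seed: fix positive integers $r_1,\dots,r_n$; a seed $\Sigma=(\mathbf x,\mathbf p,B)$ has $B$ skew-symmetrizable with $i$-th column divisible by $r_i$, coefficients $\mathbf p_i=(p_{i,1},\dots,p_{i,r_i})\in\mathbb P^{r_i}$, and cluster $\mathbf x$. With $\beta_{ij}=b_{ij}/r_j$, $p_{k;\pm}=\prod_{l=1}^{r_k}p_{k,l}^{\pm}$,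 the coefficient part of the mutation $\mu_k$ is: $B'=\mu_k(B)$, $p'_{k,j}=p_{k,j}^{-1}$, and for $i\neq k$: $p'_{i,j}=p_{i,j}p_{k;-}^{\beta_{ki}}$ if $\beta_{ik}>0$, $p'_{i,j}=p_{i,j}p_{k;+}^{\beta_{ki}}$ if $\beta_{ik}\le 0$ (the cluster mutates by $x'_k=x_k^{-1}\prod_l(p_{k,l}^+\prod_{b_{ik}>0}x_i^{\beta_{ik}}+p_{k,l}^-\prod_{b_{ik}<0}x_i^{-\beta_{ik}})$, $x'_i=x_i$ otherwise). A cluster pattern assigns seeds $\Sigma_t$ to vertices of the $n$-regular tree $\mathbb T_n$ with edges labeled $1,\dots,n$, adjacent seeds along a $k$-edge related by $\mu_k$; coefficients of $\Sigma_t$ are written $p_{i,j;t}$. Principal coefficients at $t_0$: $\mathbb P=\mathrm{Trop}(p_{i,j}\mid i\in[1,n],j\in[1,r_i])$ and $\Sigma_{t_0}$ has coefficients $\mathbf p_i=(p_{i,1},\dots,p_{i,r_i})$. Let $I'=\{(k,l):k\in[1,n],l\in[1,r_k]\}$ and $p_{(k,l)}=p_{k,l}$. For each $t$ and $i$, define $C^{(i)}_t=(c^{(i)}_{a,j})_{a\in I',j\in[1,r_i]}\in\mathrm{Mat}_{|I'|\times r_i}(\mathbb Z)$ by $p_{i,j;t}=\prod_{a\in I'}p_a^{c^{(i)}_{a,j}}$. *)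

theory Defs
  imports Main
begin

text \<open>Elements of the tropical semifield Trop(p_a | a in I'), I' = {(k,l)},
  are represented by their exponent vectors (the free abelian group written
  additively): a monomial prod_a p_a^(v a) is represented by v.
  Multiplication = addition, inverse = negation, and
  u (+) w = componentwise min.  Hence
  p^+ = p/(p(+)1) has exponent max(v,0), p^- = 1/(p(+)1) has exponent max(-v,0).\<close>

type_synonym trop = "nat \<times> nat \<Rightarrow> int"

definition trop_plus :: "trop \<Rightarrow> trop" where
  "trop_plus v = (\<lambda>a. max (v a) 0)"

definition trop_minus :: "trop \<Rightarrow> trop" where
  "trop_minus v = (\<lambda>a. max (- v a) 0)"

text \<open>Seeds (coefficient part): coefficients p i j (i in [1,n], j in [1,r i])
  and exchange matrix B.\<close>

type_synonym gseed = "(nat \<Rightarrow> nat \<Rightarrow> trop) \<times> (nat \<Rightarrow> nat \<Rightarrow> int)"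

definition skew_symmetrizable :: "nat \<Rightarrow> (nat \<Rightarrow> nat \<Rightarrow> int) \<Rightarrow> bool" where
  "skew_symmetrizable n B \<longleftrightarrow>
     (\<exists>d :: nat \<Rightarrow> int. (\<forall>i\<in>{1..n}. d i > 0) \<and>
        (\<forall>i\<in>{1..n}. \<forall>j\<in>{1..n}. d i * B i j = - (d j * B j i)))"

definition mat_mut :: "nat \<Rightarrow> (nat \<Rightarrow> nat \<Rightarrow> int) \<Rightarrow> (nat \<Rightarrow> nat \<Rightarrow> int)" where
  "mat_mut k B = (\<lambda>i j. if i = k \<or> j = k then - B i j
      else B i j + (\<bar>B i k\<bar> * B k j + B i k * \<bar>B k j\<bar>) div 2)"

definition pk_plus :: "(nat \<Rightarrow> nat) \<Rightarrow> (nat \<Rightarrow> nat \<Rightarrow> trop) \<Rightarrow> nat \<Rightarrow> trop" where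
  "pk_plus r p k = (\<lambda>a. \<Sum>l\<in>{1..r k}. trop_plus (p k l) a)"

definition pk_minus :: "(nat \<Rightarrow> nat) \<Rightarrow> (nat \<Rightarrow> nat \<Rightarrow> trop) \<Rightarrow> nat \<Rightarrow> trop" where
  "pk_minus r p k = (\<lambda>a. \<Sum>l\<in>{1..r k}. trop_minus (p k l) a)"

text \<open>Generalized seed mutation mu_k (coefficient and matrix part);
  beta i j = b i j / r j (exact by the divisibility assumption).\<close>
definition gmut :: "(nat \<Rightarrow> nat) \<Rightarrow> nat \<Rightarrow> gseed \<Rightarrow> gseed" where
  "gmut r k S = (let p = fst S; B = snd S; beta = (\<lambda>i j. B i j div int (r j)) in
     ((\<lambda>i j. if i = k then (\<lambda>a. - p k j a)
             else if beta i k > 0 then (\<lambda>a. p i j a + beta k i * pk_minus r p k a)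
             else (\<lambda>a. p i j a + beta k i * pk_plus r p k a)),
      mat_mut k B))"

text \<open>Seed at the vertex of T_n reached from t_0 by the path with edge labels ks.\<close>
definition seed_at :: "(nat \<Rightarrow> nat) \<Rightarrow> gseed \<Rightarrow> nat list \<Rightarrow> gseed" where
  "seed_at r S0 ks = foldl (\<lambda>S k. gmut r k S) S0 ks"

definition principal :: "nat \<Rightarrow> nat \<Rightarrow> trop" where
  "principal i j = (\<lambda>a. if a = (i, j) then 1 else 0)"

definition cmat :: "gseed \<Rightarrow> nat \<Rightarrow> nat \<Rightarrow> nat \<Rightarrow> nat \<Rightarrow> int" where
  "cmat S i k l j = fst S i j (k, l)"

end

theory Submission
  imports Defs
begin

definition inv_ok :: "(nat \<Rightarrow> nat) \<Rightarrow> gseed \<Rightarrow> bool" where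
  "inv_ok r S \<longleftrightarrow> (\<forall>i. \<exists>g::nat\<Rightarrow>int. \<exists>e::int. e \<in> {1,-1} \<and>
     (\<forall>j\<in>{1..r i}. \<forall>m l. l \<in> {1..r m} \<longrightarrow>
        fst S i j (m,l) = g m + (if m = i \<and> l = j then e else 0)))"

lemma sum_block:
  fixes F :: "int \<Rightarrow> int"
  assumes "l \<in> {1..R}"
  shows "(\<Sum>l0\<in>{1..R}. F (x + (if l = l0 then e else 0))) = F (x+e) + int (R - 1) * F x"
proof -
  have "(\<Sum>l0\<in>{1..R}. F (x + (if l = l0 then e else 0)))
      = F (x+e) + (\<Sum>l0\<in>{1..R}-{l}. F (x + (if l = l0 then e else 0)))"
    using assms by (subst sum.remove[of _ l]) auto
  also have "(\<Sum>l0\<in>{1..R}-{l}. F (x + (if l = l0 then e else 0))) = (\<Sum>l0\<in>{1..R}-{l}. F x)"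
    by (rule sum.cong) auto
  also have "\<dots> = int (R - 1) * F x" using assms by simp
  finally show ?thesis .
qed

lemma block_sum:
  fixes F :: "int \<Rightarrow> int" and r :: "nat \<Rightarrow> nat"
  assumes "\<forall>j\<in>{1..r k}. \<forall>m l. l \<in> {1..r m} \<longrightarrow>
        p k j (m,l) = g m + (if m = k \<and> l = j then e else 0)"
  shows "\<exists>h. \<forall>m l. l \<in> {1..r m} \<longrightarrow> (\<Sum>l0\<in>{1..r k}. F (p k l0 (m,l))) = h m"
proof (intro exI allI impI)
  fix m l assume l: "l \<in> {1..r m}"
  show "(\<Sum>l0\<in>{1..r k}. F (p k l0 (m,l))) =
     (if m = k then F (g m + e) + int (r k - 1) * F (g m) else int (r k) * F (g m))"
  proof (cases "m = k")
    case True
    have "(\<Sum>l0\<in>{1..r k}. F (p k l0 (m,l))) = (\<Sum>l0\<in>{1..r k}. F (g m + (if l = l0 then e else 0)))"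
      by (rule sum.cong) (use assms l True in auto)
    also have "\<dots> = F (g m + e) + int (r k - 1) * F (g m)"
      using l True by (intro sum_block) auto
    finally show ?thesis using True by simp
  next
    case False
    have "(\<Sum>l0\<in>{1..r k}. F (p k l0 (m,l))) = (\<Sum>l0\<in>{1..r k}. F (g m))"
      by (rule sum.cong) (use assms l False in auto)
    then show ?thesis using False by simp
  qed
qed

lemma inv_mut:
  assumes "inv_ok r S"
  shows "inv_ok r (gmut r k S)"
  unfolding inv_ok_def
proof
  fix i
  obtain p B where S: "S = (p, B)" by (cases S)
  define beta where "beta = (\<lambda>i j. B i j div int (r j))"
  have P: "\<forall>i. \<exists>g::nat\<Rightarrow>int. \<exists>e::int. e \<in> {1,-1} \<and>
     (\<forall>j\<in>{1..r i}. \<forall>m l. l \<in> {1..r m} \<longrightarrow>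
        p i j (m,l) = g m + (if m = i \<and> l = j then e else 0))"
    using assms unfolding S inv_ok_def fst_conv .
  have fst_eq: "fst (gmut r k S) = (\<lambda>i j. if i = k then (\<lambda>a. - p k j a)
             else if beta i k > 0 then (\<lambda>a. p i j a + beta k i * pk_minus r p k a)
             else (\<lambda>a. p i j a + beta k i * pk_plus r p k a))"
    unfolding gmut_def S beta_def Let_def fst_conv snd_conv by (rule refl)
  obtain gk ek where k: "ek \<in> {1,-1}" "\<forall>j\<in>{1..r k}. \<forall>m l. l \<in> {1..r m} \<longrightarrow>
        p k j (m,l) = gk m + (if m = k \<and> l = j then ek else 0)"
    using P[THEN spec[where x=k]] by (elim exE conjE) (rule that)
  obtain gi ei where ii: "ei \<in> {1,-1}" "\<forall>j\<in>{1..r i}. \<forall>m l. l \<in> {1..r m} \<longrightarrow>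
        p i j (m,l) = gi m + (if m = i \<and> l = j then ei else 0)"
    using P[THEN spec[where x=i]] by (elim exE conjE) (rule that)
  obtain hm where hm0: "\<forall>m l. l \<in> {1..r m} \<longrightarrow> (\<Sum>l0\<in>{1..r k}. (\<lambda>v. max (- v) 0) (p k l0 (m,l))) = hm m"
    using block_sum[where p=p and r=r and k=k and g=gk and e=ek and F="\<lambda>v. max (- v) 0", OF k(2)]
    by (elim exE) (rule that)
  obtain hp where hp0: "\<forall>m l. l \<in> {1..r m} \<longrightarrow> (\<Sum>l0\<in>{1..r k}. (\<lambda>v. max v 0) (p k l0 (m,l))) = hp m"
    using block_sum[where p=p and r=r and k=k and g=gk and e=ek and F="\<lambda>v. max v 0", OF k(2)]
    by (elim exE) (rule that)
  have hm: "pk_minus r p k (m,l) = hm m" if "l \<in> {1..r m}" for m l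
    using hm0 that unfolding pk_minus_def trop_minus_def by simp
  have hp: "pk_plus r p k (m,l) = hp m" if "l \<in> {1..r m}" for m l
    using hp0 that unfolding pk_plus_def trop_plus_def by simp
  show "\<exists>g::nat\<Rightarrow>int. \<exists>e::int. e \<in> {1,-1} \<and>
     (\<forall>j\<in>{1..r i}. \<forall>m l. l \<in> {1..r m} \<longrightarrow>
        fst (gmut r k S) i j (m,l) = g m + (if m = i \<and> l = j then e else 0))"
  proof (cases "i = k")
    case True
    show ?thesis
    proof (intro exI conjI ballI allI impI)
      show "- ek \<in> {1,-1}" using k(1) by auto
      fix j m l assume "j \<in> {1..r i}" "l \<in> {1..r m}"
      then show "fst (gmut r k S) i j (m,l) = - gk m + (if m = i \<and> l = j then - ek else 0)"
        using k(2) True by (simp add: fst_eq)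
    qed
  next
    case False
    show ?thesis
    proof (cases "beta i k > 0")
      case True
      show ?thesis
      proof (intro exI conjI ballI allI impI)
        show "ei \<in> {1,-1}" using ii(1) by auto
        fix j m l assume "j \<in> {1..r i}" "l \<in> {1..r m}"
        then show "fst (gmut r k S) i j (m,l) = (gi m + beta k i * hm m) + (if m = i \<and> l = j then ei else 0)"
          using ii(2) True False hm[of l m] by (simp add: fst_eq)
      qed
    next
      case F: False
      show ?thesis
      proof (intro exI conjI ballI allI impI)
        show "ei \<in> {1,-1}" using ii(1) by auto
        fix j m l assume "j \<in> {1..r i}" "l \<in> {1..r m}"
        then show "fst (gmut r k S) i j (m,l) = (gi m + beta k i * hp m) + (if m = i \<and> l = j then ei else 0)"
          using ii(2) F False hp[of l m] by (simp add: fst_eq)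
      qed
    qed
  qed
qed

lemma inv_seed: "inv_ok r S \<Longrightarrow> inv_ok r (foldl (\<lambda>S k. gmut r k S) S ks)"
proof (induction ks arbitrary: S)
  case Nil
  then show ?case by simp
next
  case (Cons a ks)
  then show ?case using inv_mut by (simp only: foldl_Cons)
qed

lemma inv_init: "inv_ok r (principal, B0)"
  unfolding inv_ok_def principal_def
  by (intro allI exI[of _ "\<lambda>_. 0"] exI[of _ 1]) auto

theorem mainTheorem4:
  fixes n :: nat and r :: "nat \<Rightarrow> nat" and B0 :: "nat \<Rightarrow> nat \<Rightarrow> int"
    and ks :: "nat list"
  assumes r_pos: "\<forall>i\<in>{1..n}. r i > 0"
    and skew: "skew_symmetrizable n B0"
    and div: "\<forall>i\<in>{1..n}. \<forall>j\<in>{1..n}. int (r j) dvd B0 i j"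
    and ks_range: "set ks \<subseteq> {1..n}"
    and ks_reduced: "successively (\<noteq>) ks"
  shows "(\<forall>i\<in>{1..n}. \<forall>k\<in>{1..n}. i \<noteq> k \<longrightarrow>
            (\<forall>l\<in>{1..r k}. \<forall>l'\<in>{1..r k}. \<forall>j\<in>{1..r i}. \<forall>j'\<in>{1..r i}.
               cmat (seed_at r (principal, B0) ks) i k l j
                 = cmat (seed_at r (principal, B0) ks) i k l' j'))
       \<and> (\<forall>i\<in>{1..n}. \<exists>c::int. \<exists>\<epsilon>::int. \<epsilon> \<in> {1, -1} \<and>
            (\<forall>l\<in>{1..r i}. cmat (seed_at r (principal, B0) ks) i i l l = c + \<epsilon>) \<and>
            (\<forall>l\<in>{1..r i}. \<forall>j\<in>{1..r i}. l \<noteq> j \<longrightarrow>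
               cmat (seed_at r (principal, B0) ks) i i l j = c))"
proof -
  define S where "S = seed_at r (principal, B0) ks"
  have I: "inv_ok r S" unfolding S_def seed_at_def by (rule inv_seed[OF inv_init])
  show ?thesis
    unfolding S_def[symmetric]
  proof (intro conjI ballI impI)
    fix i k l l' j j' assume a: "i \<in> {1..n}" "k \<in> {1..n}" "i \<noteq> k" "l \<in> {1..r k}"
      "l' \<in> {1..r k}" "j \<in> {1..r i}" "j' \<in> {1..r i}"
    obtain g e where ge0: "e \<in> {1,-1}" and ge: "\<forall>j\<in>{1..r i}. \<forall>m l. l \<in> {1..r m} \<longrightarrow>
        fst S i j (m,l) = g m + (if m = i \<and> l = j then e else 0)"
      using I unfolding inv_ok_def by (elim allE[where x=i] exE conjE) (rule that)
    have 1: "fst S i j (k,l) = g k" using ge[rule_format, OF a(6) a(4)] a(3) by simp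
    have 2: "fst S i j' (k,l') = g k" using ge[rule_format, OF a(7) a(5)] a(3) by simp
    show "cmat S i k l j = cmat S i k l' j'" unfolding cmat_def using 1 2 by simp
  next
    fix i assume "i \<in> {1..n}"
    obtain g e where ge: "e \<in> {1,-1}" "\<forall>j\<in>{1..r i}. \<forall>m l. l \<in> {1..r m} \<longrightarrow>
        fst S i j (m,l) = g m + (if m = i \<and> l = j then e else 0)"
      using I unfolding inv_ok_def by (elim allE[where x=i] exE conjE) (rule that)
    show "\<exists>c::int. \<exists>\<epsilon>::int. \<epsilon> \<in> {1, -1} \<and>
            (\<forall>l\<in>{1..r i}. cmat S i i l l = c + \<epsilon>) \<and>
            (\<forall>l\<in>{1..r i}. \<forall>j\<in>{1..r i}. l \<noteq> j \<longrightarrow> cmat S i i l j = c)"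
    proof (intro exI conjI ballI impI)
      show "e \<in> {1,-1}" by (rule ge(1))
      fix l assume l: "l \<in> {1..r i}"
      have "fst S i l (i,l) = g i + (if i = i \<and> l = l then e else 0)" using ge(2)[rule_format, OF l l] .
      then show "cmat S i i l l = g i + e" unfolding cmat_def by simp
    next
      fix l j assume l: "l \<in> {1..r i}" and j: "j \<in> {1..r i}" and lj: "l \<noteq> j"
      have "fst S i j (i,l) = g i + (if i = i \<and> l = j then e else 0)" using ge(2)[rule_format, OF j l] .
      then show "cmat S i i l j = g i" unfolding cmat_def using lj by simp
    qed
  qed
qed

end
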